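(* Let $T$ be a TCD map on a minimal BTB graph $G$. Let $f$ be an internal face with boundary vertices $b_1,w_1,\dots,b_m,w_m$ in counterclockwise cyclic order (so $b_i$ is adjacent to $w_{i-1}$ and $w_i$, indices mod $m$), and let $v_i$ be the third white neighbour of $b_i$. Then $$X_f=(-1)^{m+1}\,\mathrm{mr}\bigl(T(w_1),T(v_2),T(w_2),T(v_3),\dots,T(w_m),T(v_1)\bigr)=-\prod_{i=1}^m\lambda\bigl(T(w_{i-1}),T(w_i),T(v_i)\bigr).$$
   Context: A BTB graph is a planar bipartite graph (black $B$, white $W$, faces $F$) in a disk or cactus. It has boundary white vertices on the boundary and every black vertex of degree $3$. It is minimal if zig-zag paths (turning maximally left at white and right at black vertices) are never closed, never traverse an edge twice, and no two both traverse two distinct edges $e_1$ then $e_2$. Internal faces are those not adjacent to the boundary. A TCD map is $T:W\to\mathbb{CP}^d$ such that the neighbours of each black vertex have pairwise distinct collinear images. A VRC of $T$ consists of lifts $V(w)\neq 0$ and nonzero weights $\mu$ with $\sum_{w\sim b}\mu(bw)V(w)=0$. The projective cluster variable of an internal face is $X_f=(-1)^{m+1}\prod_{i=1}^m\mu(b_iw_i)/\mu(b_iw_{i-1})$, with labelling as in the claim; it is gauge independent. For collinear $P_1,P_2,P_3$ in an affine chart, $\lambda(P_1,P_2,P_3)=(P_1-P_3)/(P_2-P_3)$. For points $P_1,P_{1,2},P_2,P_{2,3},\dots,P_m,P_{m,1}$ with each $P_{i,i+1}$ on the line $P_iP_{i+1}$, the multi-ratio is $\mathrm{mr}=\prod_{i=1}^m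 (P_i-P_{i,i+1})/(P_{i,i+1}-P_{i+1})$, computed in any affine chart containing all points. *)

theory Defs
  imports "HOL-Analysis.Analysis"
begin

text \<open>Points of CP^d are represented by nonzero vectors
  in complex^'n (d + 1 = CARD('n)), considered up to nonzero scaling.\<close>

definition nbrs :: "('b \<times> 'w) set \<Rightarrow> 'b \<Rightarrow> 'w set" where
  "nbrs E b = {w. (b, w) \<in> E}"

text \<open>Bipartite graph in which every black vertex has degree 3 (combinatorial part
  of a BTB graph; planar embedding, boundary and minimality are not encoded).\<close>
definition btb_graph :: "'b set \<Rightarrow> 'w set \<Rightarrow> ('b \<times> 'w) set \<Rightarrow> bool" where
  "btb_graph B W E \<longleftrightarrow> finite B \<and> finite W \<and> E \<subseteq> B \<times> W \<and>
     (\<forall>b\<in>B. card (nbrs E b) = 3)"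

definition proj_eq :: "'a::field ^ 'n \<Rightarrow> 'a ^ 'n \<Rightarrow> bool" where
  "proj_eq u v \<longleftrightarrow> u \<noteq> 0 \<and> v \<noteq> 0 \<and> (\<exists>c. u = c *s v)"

text \<open>TCD map: neighbours of each black vertex have pairwise distinct, collinear images
  (collinear = the representatives span a subspace of dimension at most 2).\<close>
definition tcd_map :: "'b set \<Rightarrow> 'w set \<Rightarrow> ('b \<times> 'w) set \<Rightarrow> ('w \<Rightarrow> complex ^ 'n) \<Rightarrow> bool" where
  "tcd_map B W E T \<longleftrightarrow> (\<forall>w\<in>W. T w \<noteq> 0) \<and>
     (\<forall>b\<in>B. (\<forall>w1\<in>nbrs E b. \<forall>w2\<in>nbrs E b. w1 \<noteq> w2 \<longrightarrow> \<not> proj_eq (T w1) (T w2)) \<and>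
             vec.dim (T ` nbrs E b) \<le> 2)"

definition vrc :: "'b set \<Rightarrow> 'w set \<Rightarrow> ('b \<times> 'w) set \<Rightarrow> ('w \<Rightarrow> complex ^ 'n)
     \<Rightarrow> ('w \<Rightarrow> complex ^ 'n) \<Rightarrow> ('b \<Rightarrow> 'w \<Rightarrow> complex) \<Rightarrow> bool" where
  "vrc B W E T V \<mu> \<longleftrightarrow> (\<forall>w\<in>W. V w \<noteq> 0 \<and> proj_eq (V w) (T w)) \<and>
     (\<forall>(b, w)\<in>E. \<mu> b w \<noteq> 0) \<and>
     (\<forall>b\<in>B. (\<Sum>w\<in>nbrs E b. \<mu> b w *s V w) = 0)"

text \<open>Projective cluster variable of a face with boundary b_0,w_0,...,b_(m-1),w_(m-1)
  (0-based; b_i adjacent to w_(i-1 mod m) and w_i).\<close>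
definition face_X :: "nat \<Rightarrow> ('b \<Rightarrow> 'w \<Rightarrow> complex) \<Rightarrow> (nat \<Rightarrow> 'b) \<Rightarrow> (nat \<Rightarrow> 'w) \<Rightarrow> complex" where
  "face_X m \<mu> b w = (-1) ^ (m + 1) *
     (\<Prod>i<m. \<mu> (b i) (w i) / \<mu> (b i) (w ((i + m - 1) mod m)))"

definition chart_fun :: "complex ^ 'n \<Rightarrow> complex ^ 'n \<Rightarrow> complex" where
  "chart_fun a x = (\<Sum>k\<in>UNIV. a $ k * x $ k)"

definition aff :: "complex ^ 'n \<Rightarrow> complex ^ 'n \<Rightarrow> complex ^ 'n" where
  "aff a x = inverse (chart_fun a x) *s x"

definition vratio :: "complex ^ 'n \<Rightarrow> complex ^ 'n \<Rightarrow> complex" where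
  "vratio u v = (THE c. u = c *s v)"

definition lam :: "complex ^ 'n \<Rightarrow> complex ^ 'n \<Rightarrow> complex ^ 'n \<Rightarrow> complex ^ 'n \<Rightarrow> complex" where
  "lam a P1 P2 P3 = vratio (aff a P1 - aff a P3) (aff a P2 - aff a P3)"

text \<open>Multi-ratio of P_0, Q_0, P_1, Q_1, ..., P_(m-1), Q_(m-1), where Q_i lies on the line
  P_i P_(i+1 mod m).\<close>
definition multi_ratio :: "complex ^ 'n \<Rightarrow> (nat \<Rightarrow> complex ^ 'n) \<Rightarrow> (nat \<Rightarrow> complex ^ 'n) \<Rightarrow> nat \<Rightarrow> complex" where
  "multi_ratio a P Q m = (\<Prod>i<m. vratio (aff a (P i) - aff a (Q i))
                                         (aff a (Q i) - aff a (P ((i + 1) mod m))))"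

end

theory Submission
  imports Defs
begin


lemma chart_add: "chart_fun a (x + y) = chart_fun a x + chart_fun a y"
  by (simp add: chart_fun_def distrib_left sum.distrib)

lemma chart_smult: "chart_fun a (c *s x) = c * chart_fun a x"
  by (simp add: chart_fun_def sum_distrib_left mult.assoc mult.left_commute)

lemma vratio_eq:
  fixes u v :: "complex ^ 'n"
  assumes "v \<noteq> 0" "u = c *s v"
  shows "vratio u v = c"
proof -
  obtain k where k: "v $ k \<noteq> 0" using assms(1) by (metis vec_eq_iff zero_index)
  have "\<And>d. u = d *s v \<Longrightarrow> d = c"
  proof -
    fix d assume "u = d *s v"
    then have "d * v $ k = c * v $ k" using assms(2) by (metis vector_smult_component)
    then show "d = c" using k by simp
  qed
  then show ?thesis unfolding vratio_def using assms(2) by (rule_tac the_equality) auto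
qed

lemma local3:
  fixes T1 T2 T3 a :: "complex ^ 'n"
  assumes rel: "k1 *s T1 + k2 *s T2 + k3 *s T3 = 0" and k1: "k1 \<noteq> 0"
    and l1: "chart_fun a T1 \<noteq> 0" and l2: "chart_fun a T2 \<noteq> 0" and l3: "chart_fun a T3 \<noteq> 0"
    and np: "\<not> proj_eq T2 T3" and n2: "T2 \<noteq> 0" and n3: "T3 \<noteq> 0"
  shows "aff a T2 - aff a T3 \<noteq> 0"
    and "aff a T1 - aff a T3 = (- (k2 * chart_fun a T2) / (k1 * chart_fun a T1)) *s (aff a T2 - aff a T3)"
proof -
  show "aff a T2 - aff a T3 \<noteq> 0"
  proof
    assume "aff a T2 - aff a T3 = 0"
    then have "inverse (chart_fun a T2) *s T2 = inverse (chart_fun a T3) *s T3"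
      by (simp add: aff_def)
    then have "chart_fun a T2 *s (inverse (chart_fun a T2) *s T2) = chart_fun a T2 *s (inverse (chart_fun a T3) *s T3)"
      by simp
    then have "T2 = (chart_fun a T2 * inverse (chart_fun a T3)) *s T3"
      using l2 by (simp add: vector_smult_assoc)
    then show False using np n2 n3 unfolding proj_eq_def by blast
  qed
  have s: "k1 * chart_fun a T1 + k2 * chart_fun a T2 + k3 * chart_fun a T3 = 0"
    proof -
    have "chart_fun a (k1 *s T1 + k2 *s T2 + k3 *s T3) = 0" by (simp add: rel chart_fun_def)
    then show ?thesis by (simp only: chart_add chart_smult)
  qed
  have k3: "k3 = - (k1 * chart_fun a T1 + k2 * chart_fun a T2) / chart_fun a T3"
    using s l3 by (simp add: field_simps) (metis add_eq_0_iff2 add.commute)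
  show "aff a T1 - aff a T3 = (- (k2 * chart_fun a T2) / (k1 * chart_fun a T1)) *s (aff a T2 - aff a T3)"
  proof (rule iffD2[OF vec_eq_iff], rule allI)
    fix i
    have r: "k1 * T1 $ i + k2 * T2 $ i + k3 * T3 $ i = 0"
      using arg_cong[OF rel, of "\<lambda>x. x $ i"] by simp
    show "(aff a T1 - aff a T3) $ i = ((- (k2 * chart_fun a T2) / (k1 * chart_fun a T1)) *s (aff a T2 - aff a T3)) $ i"
      using r k1 l1 l2 l3 unfolding k3 aff_def
      apply (simp add: field_simps)
      apply (drule arg_cong[where f="\<lambda>x. chart_fun a T1 * chart_fun a T3 * x"])
      by (simp add: algebra_simps)
  qed
qed


lemma bij_shift1:
  assumes "0 < (m::nat)"
  shows "bij_betw (\<lambda>i. (i + 1) mod m) {..<m} {..<m}"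
proof -
  have inj: "inj_on (\<lambda>i. (i + 1) mod m) {..<m}"
  proof (rule inj_onI)
    fix x y assume "x \<in> {..<m}" "y \<in> {..<m}" "(x + 1) mod m = (y + 1) mod m"
    then show "x = y" by (auto simp: mod_if split: if_splits)
  qed
  have "(\<lambda>i. (i + 1) mod m) ` {..<m} \<subseteq> {..<m}" using assms by auto
  then have "(\<lambda>i. (i + 1) mod m) ` {..<m} = {..<m}" using inj by (simp add: endo_inj_surj)
  then show ?thesis using inj by (simp add: bij_betw_def)
qed

lemma bij_shiftm:
  assumes "0 < (m::nat)"
  shows "bij_betw (\<lambda>i. (i + m - 1) mod m) {..<m} {..<m}"
proof -
  have inj: "inj_on (\<lambda>i. (i + m - 1) mod m) {..<m}"
  proof (rule inj_onI)
    fix x y assume "x \<in> {..<m}" "y \<in> {..<m}" "(x + m - 1) mod m = (y + m - 1) mod m"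
    then show "x = y" using assms by (auto simp: mod_if split: if_splits)
  qed
  have "(\<lambda>i. (i + m - 1) mod m) ` {..<m} \<subseteq> {..<m}" using assms by auto
  then have "(\<lambda>i. (i + m - 1) mod m) ` {..<m} = {..<m}" using inj by (simp add: endo_inj_surj)
  then show ?thesis using inj by (simp add: bij_betw_def)
qed

lemma prod_shift1:
  assumes "0 < (m::nat)"
  shows "(\<Prod>i<m. g ((i + 1) mod m)) = (\<Prod>i<m. (g i :: complex))"
  using prod.reindex_bij_betw[OF bij_shift1[OF assms], of g] by simp

lemma prod_shiftm:
  assumes "0 < (m::nat)"
  shows "(\<Prod>i<m. g ((i + m - 1) mod m)) = (\<Prod>i<m. (g i :: complex))"
  using prod.reindex_bij_betw[OF bij_shiftm[OF assms], of g] by simp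

theorem proposition7p10:
  fixes B :: "'b set" and W :: "'w set" and E :: "('b \<times> 'w) set"
    and T V :: "'w \<Rightarrow> complex ^ 'n" and \<mu> :: "'b \<Rightarrow> 'w \<Rightarrow> complex"
    and m :: nat and b :: "nat \<Rightarrow> 'b" and w v :: "nat \<Rightarrow> 'w" and a :: "complex ^ 'n"
  assumes "btb_graph B W E"
    and "tcd_map B W E T"
    and "vrc B W E T V \<mu>"
    and "2 \<le> m"
    and "\<forall>i<m. b i \<in> B \<and> w i \<in> W \<and> (b i, w i) \<in> E \<and> (b i, w ((i + m - 1) mod m)) \<in> E
               \<and> w ((i + m - 1) mod m) \<noteq> w i"
    and "\<forall>i<m. v i \<in> nbrs E (b i) - {w ((i + m - 1) mod m), w i}"
    and "\<forall>i<m. chart_fun a (T (w i)) \<noteq> 0 \<and> chart_fun a (T (v i)) \<noteq> 0"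
  shows "face_X m \<mu> b w
           = (-1) ^ (m + 1) * multi_ratio a (\<lambda>i. T (w i)) (\<lambda>i. T (v ((i + 1) mod m))) m
       \<and> (-1) ^ (m + 1) * multi_ratio a (\<lambda>i. T (w i)) (\<lambda>i. T (v ((i + 1) mod m))) m
           = - (\<Prod>i<m. lam a (T (w ((i + m - 1) mod m))) (T (w i)) (T (v i)))"
proof -
  define pm where "pm i = (i + m - 1) mod m" for i
  define cf where "cf x = (SOME c. V x = c *s T x)" for x
  define L where "L x = chart_fun a (T x)" for x
  define k1 where "k1 i = \<mu> (b i) (w (pm i)) * cf (w (pm i))" for i
  define k2 where "k2 i = \<mu> (b i) (w i) * cf (w i)" for i
  define k3 where "k3 i = \<mu> (b i) (v i) * cf (v i)" for i
  define r where "r i = (k2 i * L (w i)) / (k1 i * L (w (pm i)))" for i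
  define P where "P i = aff a (T (w i))" for i
  define Q where "Q i = aff a (T (v i))" for i
  have m0: "0 < m" using assms(4) by simp
  have EBW: "E \<subseteq> B \<times> W" and card3: "\<forall>b\<in>B. card (nbrs E b) = 3"
    using assms(1) unfolding btb_graph_def by auto
  have Tnz: "\<And>x. x \<in> W \<Longrightarrow> T x \<noteq> 0" using assms(2) unfolding tcd_map_def by auto
  have cfW: "\<And>x. x \<in> W \<Longrightarrow> V x = cf x *s T x \<and> cf x \<noteq> 0"
  proof -
    fix x assume x: "x \<in> W"
    then have "V x \<noteq> 0" "\<exists>c. V x = c *s T x"
      using assms(3) unfolding vrc_def proj_eq_def by auto
    then have "V x = cf x *s T x" unfolding cf_def by (metis (mono_tags, lifting) someI_ex)
    then show "V x = cf x *s T x \<and> cf x \<noteq> 0" using \<open>V x \<noteq> 0\<close> by auto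
  qed
  have key: "r i \<noteq> 0 \<and> P i - Q i \<noteq> 0 \<and> P (pm i) - Q i = (- r i) *s (P i - Q i)
     \<and> \<mu> (b i) (w i) / \<mu> (b i) (w (pm i)) = r i * (cf (w (pm i)) * L (w (pm i))) / (cf (w i) * L (w i))"
    if i: "i < m" for i
  proof -
    have bi: "b i \<in> B" and e1: "(b i, w i) \<in> E" and e0: "(b i, w (pm i)) \<in> E"
      and ne: "w (pm i) \<noteq> w i" using assms(5) i unfolding pm_def by auto
    have vi: "v i \<in> nbrs E (b i)" "v i \<noteq> w (pm i)" "v i \<noteq> w i" using assms(6) i unfolding pm_def by auto
    have ev: "(b i, v i) \<in> E" using vi unfolding nbrs_def by auto
    have wW: "w i \<in> W" "w (pm i) \<in> W" "v i \<in> W" using EBW e1 e0 ev by auto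
    have pmi: "pm i < m" using m0 unfolding pm_def by auto
    have Lnz: "L (w i) \<noteq> 0" "L (w (pm i)) \<noteq> 0" "L (v i) \<noteq> 0"
      using assms(7) i pmi unfolding L_def by auto
    have mnz: "\<mu> (b i) (w i) \<noteq> 0" "\<mu> (b i) (w (pm i)) \<noteq> 0" "\<mu> (b i) (v i) \<noteq> 0"
      using assms(3) e1 e0 ev unfolding vrc_def by auto
    have NS: "nbrs E (b i) = {w (pm i), w i, v i}"
    proof -
      have c: "card (nbrs E (b i)) = 3" using card3 bi by auto
      then have f: "finite (nbrs E (b i))" by (metis card.infinite zero_neq_numeral)
      have sub: "{w (pm i), w i, v i} \<subseteq> nbrs E (b i)" using e1 e0 vi unfolding nbrs_def by auto
      have "card {w (pm i), w i, v i} = 3" using ne vi by auto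
      then show ?thesis using card_subset_eq[OF f sub] c by simp
    qed
    have "(\<Sum>x\<in>nbrs E (b i). \<mu> (b i) x *s V x) = 0" using assms(3) bi unfolding vrc_def by auto
    then have "\<mu> (b i) (w (pm i)) *s V (w (pm i)) + \<mu> (b i) (w i) *s V (w i) + \<mu> (b i) (v i) *s V (v i) = 0"
      unfolding NS using ne vi by (simp add: add.assoc)
    then have rel: "k1 i *s T (w (pm i)) + k2 i *s T (w i) + k3 i *s T (v i) = 0"
      using cfW[OF wW(1)] cfW[OF wW(2)] cfW[OF wW(3)] unfolding k1_def k2_def k3_def
      by (simp add: vector_smult_assoc)
    have k1nz: "k1 i \<noteq> 0" "k2 i \<noteq> 0" using mnz cfW wW unfolding k1_def k2_def by auto
    have np: "\<not> proj_eq (T (w i)) (T (v i))"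
      using assms(2) bi vi e1 unfolding tcd_map_def nbrs_def by auto
    note l = local3[OF rel k1nz(1) Lnz(2)[unfolded L_def] Lnz(1)[unfolded L_def] Lnz(3)[unfolded L_def] np Tnz[OF wW(1)] Tnz[OF wW(3)]]
    have rnz: "r i \<noteq> 0" using k1nz Lnz unfolding r_def by auto
    have "\<mu> (b i) (w i) / \<mu> (b i) (w (pm i)) = r i * (cf (w (pm i)) * L (w (pm i))) / (cf (w i) * L (w i))"
      proof -
      have c: "cf (w i) \<noteq> 0" "cf (w (pm i)) \<noteq> 0" using cfW wW by auto
      show ?thesis using Lnz mnz c unfolding r_def k1_def k2_def by (simp add: field_simps)
    qed
    then show ?thesis using l rnz unfolding P_def Q_def r_def L_def by simp
  qed
  have lamr: "lam a (T (w (pm i))) (T (w i)) (T (v i)) = - r i" if "i < m" for i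
    using key[OF that] unfolding lam_def P_def[symmetric] Q_def[symmetric] by (simp add: vratio_eq)
  have mrr: "vratio (P i - Q ((i + 1) mod m)) (Q ((i + 1) mod m) - P ((i + 1) mod m)) = r ((i + 1) mod m)"
    if "i < m" for i
  proof -
    have j: "(i + 1) mod m < m" using m0 by simp
    have pj: "pm ((i + 1) mod m) = i" using that m0 unfolding pm_def
      by (auto simp: mod_if)
    have "Q ((i + 1) mod m) - P ((i + 1) mod m) = - (P ((i + 1) mod m) - Q ((i + 1) mod m))" by simp
    define j where "j = (i + 1) mod m"
    have K: "P j - Q j \<noteq> 0" "P (pm j) - Q j = (- r j) *s (P j - Q j)" using key[OF j] unfolding j_def by auto
    have "P i - Q j = r j *s (Q j - P j)" using K(2) pj unfolding j_def[symmetric]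
      by (simp add: vec_eq_iff algebra_simps)
    moreover have "Q j - P j \<noteq> 0" using K(1) by (metis right_minus_eq)
    ultimately show ?thesis unfolding j_def[symmetric] by (intro vratio_eq)
  qed
  have X: "face_X m \<mu> b w = (-1) ^ (m + 1) * (\<Prod>i<m. r i)"
  proof -
    have "(\<Prod>i<m. \<mu> (b i) (w i) / \<mu> (b i) (w (pm i)))
        = (\<Prod>i<m. r i) * ((\<Prod>i<m. cf (w (pm i)) * L (w (pm i))) / (\<Prod>i<m. cf (w i) * L (w i)))"
      proof -
      have "(\<Prod>i<m. \<mu> (b i) (w i) / \<mu> (b i) (w (pm i)))
          = (\<Prod>i<m. r i * (cf (w (pm i)) * L (w (pm i))) / (cf (w i) * L (w i)))"
        using key by (intro prod.cong) auto
      also have "\<dots> = (\<Prod>i<m. r i * ((cf (w (pm i)) * L (w (pm i))) / (cf (w i) * L (w i))))"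
        by simp
      also have "\<dots> = (\<Prod>i<m. r i) * (\<Prod>i<m. (cf (w (pm i)) * L (w (pm i))) / (cf (w i) * L (w i)))"
        by (rule prod.distrib)
      also have "(\<Prod>i<m. (cf (w (pm i)) * L (w (pm i))) / (cf (w i) * L (w i)))
          = (\<Prod>i<m. cf (w (pm i)) * L (w (pm i))) / (\<Prod>i<m. cf (w i) * L (w i))"
        by (rule prod_dividef)
      finally show ?thesis .
    qed
    also have "(\<Prod>i<m. cf (w (pm i)) * L (w (pm i))) = (\<Prod>i<m. cf (w i) * L (w i))"
      unfolding pm_def by (rule prod_shiftm[OF m0])
    also have "(\<Prod>i<m. cf (w i) * L (w i)) \<noteq> 0"
    proof -
      have "\<forall>i<m. cf (w i) * L (w i) \<noteq> 0"
        using assms(5,7) cfW unfolding L_def by auto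
      then show ?thesis by (simp add: prod_zero_iff)
    qed
    ultimately show ?thesis unfolding face_X_def pm_def by simp
  qed
  have MR: "multi_ratio a (\<lambda>i. T (w i)) (\<lambda>i. T (v ((i + 1) mod m))) m = (\<Prod>i<m. r i)"
  proof -
    have "multi_ratio a (\<lambda>i. T (w i)) (\<lambda>i. T (v ((i + 1) mod m))) m = (\<Prod>i<m. r ((i + 1) mod m))"
      unfolding multi_ratio_def P_def[symmetric] Q_def[symmetric] using mrr by (simp add: P_def Q_def)
    then show ?thesis using prod_shift1[OF m0, of r] by simp
  qed
  have LM: "(\<Prod>i<m. lam a (T (w ((i + m - 1) mod m))) (T (w i)) (T (v i))) = (-1) ^ m * (\<Prod>i<m. r i)"
  proof -
    have "(\<Prod>i<m. lam a (T (w ((i + m - 1) mod m))) (T (w i)) (T (v i))) = (\<Prod>i<m. - r i)"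
      using lamr unfolding pm_def by simp
    also have "\<dots> = (\<Prod>i<m. (-1::complex)) * (\<Prod>i<m. r i)"
      by (subst prod.distrib[symmetric]) simp
    also have "\<dots> = (-1) ^ m * (\<Prod>i<m. r i)" by simp
    finally show ?thesis .
  qed
  show ?thesis using X MR LM by simp
qed

end
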